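(* Let $D$ be a domain in $\mathbb{C}^m$ and $\xi(\cdot)=(\xi_\alpha(\cdot))_{\alpha\in\mathbb{N}^n}$ a functional-valued function on $D$ with $\xi(w)\in\ell_1^{(n)}$ for every $w\in D$. Suppose that for every bounded domain $\Omega'\subset\mathbb{C}^n$, every $z_0\in\Omega'$ and every $F\in A^2(\Omega')$, the function $w\mapsto(\xi(w)\cdot F)(z_0)$ is holomorphic on $D$. Then $\xi(\cdot)$ is holomorphic and satisfies the locally uniformly bounded property on $D$.
   Context: $\mathbb{N}=\mathbb{Z}_{\ge 0}$. $\ell_1^{(n)}$ is the space of sequences $\xi=(\xi_\alpha)_{\alpha\in\mathbb{N}^n}$ of complex numbers with $\sum_{\alpha}|\xi_\alpha|\rho^{|\alpha|}<+\infty$ for every $\rho>0$. For a holomorphic germ $F$ at $z_0\in\mathbb{C}^n$, $(\xi\cdot F)(z_0)\coloneqq\sum_\alpha \xi_\alpha F^{(\alpha)}(z_0)/\alpha!$. $A^2(\Omega')$ is the space of holomorphic functions $F$ on $\Omega'$ with $\int_{\Omega'}|F|^2<+\infty$. $\xi(\cdot)$ is holomorphic on $D$ if each $\xi_\alpha$ is holomorphic on $D$; it satisfies the locally uniformly bounded property on $D$ if for every $w\in D$ and $\rho>0$ there is a neighborhood $V$ of $w$ with $\sup_{w'\in V}\sum_\alpha|\xi_\alpha(w')|\rho^{|\alpha|}<+\infty$. *)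

theory Defs
  imports "HOL-Analysis.Analysis"
begin

text \<open>Holomorphy of a function of several complex variables on an open set:
  complex Frechet differentiability at every point (the derivative is a
  complex-linear form v \<mapsto> sum_k a_k v_k).\<close>
definition holo_on :: "(complex^'k) set \<Rightarrow> (complex^'k \<Rightarrow> complex) \<Rightarrow> bool" where
  "holo_on S f \<longleftrightarrow> open S \<and>
     (\<forall>z\<in>S. \<exists>a::complex^'k. (f has_derivative (\<lambda>v. \<Sum>k\<in>UNIV. a$k * v$k)) (at z))"

definition mlen :: "('n::finite \<Rightarrow> nat) \<Rightarrow> nat" where
  "mlen \<alpha> = (\<Sum>j\<in>UNIV. \<alpha> j)"

definition mfact :: "('n::finite \<Rightarrow> nat) \<Rightarrow> nat" where
  "mfact \<alpha> = (\<Prod>j\<in>UNIV. fact (\<alpha> j))"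

definition pdiff :: "'n \<Rightarrow> (complex^'n \<Rightarrow> complex) \<Rightarrow> complex^'n \<Rightarrow> complex" where
  "pdiff j F z = deriv (\<lambda>t. F (z + axis j t)) 0"

text \<open>Derivative F^(alpha): apply pdiff j alpha_j times for each coordinate j,
  in a fixed (chosen) order of the coordinates (for holomorphic F the order is irrelevant).\<close>
definition coord_list :: "'n::finite list" where
  "coord_list = (SOME xs. distinct xs \<and> set xs = UNIV)"

definition mderiv :: "('n::finite \<Rightarrow> nat) \<Rightarrow> (complex^'n \<Rightarrow> complex) \<Rightarrow> complex^'n \<Rightarrow> complex" where
  "mderiv \<alpha> F = foldr (\<lambda>j G. (pdiff j ^^ \<alpha> j) G) coord_list F"

definition ell1 :: "(('n::finite \<Rightarrow> nat) \<Rightarrow> complex) \<Rightarrow> bool" where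
  "ell1 \<xi> \<longleftrightarrow> (\<forall>\<rho>>0. (\<lambda>\<alpha>. norm (\<xi> \<alpha>) * \<rho> ^ mlen \<alpha>) summable_on UNIV)"

definition pairing :: "(('n::finite \<Rightarrow> nat) \<Rightarrow> complex) \<Rightarrow> (complex^'n \<Rightarrow> complex) \<Rightarrow> complex^'n \<Rightarrow> complex" where
  "pairing \<xi> F z0 = (\<Sum>\<^sub>\<infinity>\<alpha>. \<xi> \<alpha> * mderiv \<alpha> F z0 / of_nat (mfact \<alpha>))"

definition A2 :: "(complex^'n) set \<Rightarrow> (complex^'n \<Rightarrow> complex) set" where
  "A2 \<Omega> = {F. holo_on \<Omega> F \<and> (\<lambda>z. (norm (F z))\<^sup>2) integrable_on \<Omega>}"

definition domain :: "(complex^'k) set \<Rightarrow> bool" where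
  "domain S \<longleftrightarrow> open S \<and> connected S \<and> S \<noteq> {}"

definition loc_unif_bounded :: "(complex^'m) set \<Rightarrow> (complex^'m \<Rightarrow> ('n::finite \<Rightarrow> nat) \<Rightarrow> complex) \<Rightarrow> bool" where
  "loc_unif_bounded D \<xi> \<longleftrightarrow> (\<forall>w\<in>D. \<forall>\<rho>>0. \<exists>V. open V \<and> w \<in> V \<and> V \<subseteq> D \<and>
      (\<exists>B. \<forall>w'\<in>V. (\<Sum>\<^sub>\<infinity>\<alpha>. norm (\<xi> w' \<alpha>) * \<rho> ^ mlen \<alpha>) \<le> B))"

end

theory Submission
  imports Defs "HOL-Complex_Analysis.Complex_Analysis"
begin


definition mmon :: "('n::finite \<Rightarrow> nat) \<Rightarrow> complex^'n \<Rightarrow> complex" where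
  "mmon \<beta> z = prod (\<lambda>j. (z$j) ^ \<beta> j) UNIV"

definition mps :: "(('n::finite \<Rightarrow> nat) \<Rightarrow> complex) \<Rightarrow> complex^'n \<Rightarrow> complex" where
  "mps d z = (\<Sum>\<^sub>\<infinity>\<beta>. d \<beta> * mmon \<beta> z)"

definition goodR :: "real \<Rightarrow> (('n::finite \<Rightarrow> nat) \<Rightarrow> complex) \<Rightarrow> bool" where
  "goodR R d \<longleftrightarrow> (\<forall>s. 0 < s \<and> s < R \<longrightarrow> (\<lambda>\<beta>. norm (d \<beta>) * s ^ mlen \<beta>) summable_on UNIV)"

lemma mlen_power: "(q::'a::comm_monoid_mult) ^ mlen \<beta> = prod (\<lambda>j. q ^ \<beta> j) UNIV"
  by (simp add: mlen_def power_sum)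

lemma geom_le: 
  fixes q :: real assumes "0 \<le> q" "q < 1"
  shows "(\<Sum>k\<in>{..N}. q ^ k) \<le> 1 / (1 - q)"
proof -
  have "(\<Sum>k\<in>{..N}. q ^ k) \<le> suminf (\<lambda>k. q ^ k)"
    by (rule sum_le_suminf) (use assms in \<open>auto intro: summable_geometric\<close>)
  also have "\<dots> = 1 / (1 - q)" using assms by (simp add: suminf_geometric)
  finally show ?thesis .
qed

lemma geom_summable:
  fixes q :: real
  assumes "0 \<le> q" "q < 1"
  shows "(\<lambda>\<beta>::'n::finite \<Rightarrow> nat. q ^ mlen \<beta>) summable_on UNIV"
proof (rule nonneg_bdd_above_summable_on)
  show "bdd_above (sum (\<lambda>\<beta>::'n \<Rightarrow> nat. q ^ mlen \<beta>) ` {F. F \<subseteq> UNIV \<and> finite F})"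
  proof (rule bdd_aboveI2)
    fix P :: "('n \<Rightarrow> nat) set" assume "P \<in> {F. F \<subseteq> UNIV \<and> finite F}"
    then have fin: "finite P" by simp
    define N where "N = Max (insert 0 ((\<lambda>(\<beta>,j). \<beta> j) ` (P \<times> UNIV)))"
    have sub: "P \<subseteq> PiE UNIV (\<lambda>_. {..N})"
    proof
      fix \<beta> assume "\<beta> \<in> P"
      then have "\<beta> j \<le> N" for j unfolding N_def
        by (intro Max_ge) (use fin in auto)
      then show "\<beta> \<in> PiE UNIV (\<lambda>_. {..N})" by auto
    qed
    have "sum (\<lambda>\<beta>. q ^ mlen \<beta>) P \<le> sum (\<lambda>\<beta>. q ^ mlen \<beta>) (PiE UNIV (\<lambda>_::'n. {..N}))"
      by (rule sum_mono2) (use sub assms in \<open>auto simp: finite_PiE\<close>)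
    also have "\<dots> = (\<Prod>j\<in>(UNIV::'n set). \<Sum>k\<in>{..N}. q ^ k)"
      by (subst prod_sum_PiE) (auto simp: mlen_power)
    also have "\<dots> \<le> (\<Prod>j\<in>(UNIV::'n set). 1 / (1 - q))"
      by (rule prod_mono) (use assms geom_le in \<open>auto intro: sum_nonneg\<close>)
    finally show "sum (\<lambda>\<beta>. q ^ mlen \<beta>) P \<le> (\<Prod>j\<in>(UNIV::'n set). 1 / (1 - q))" .
  qed
qed (use assms in auto)

lemma has_sum_diff:
  fixes f g :: "'a \<Rightarrow> 'b::{topological_ab_group_add}"
  assumes "(f has_sum a) A" "(g has_sum b) A"
  shows "((\<lambda>x. f x - g x) has_sum (a - b)) A"
proof -
  have "((\<lambda>x. - g x) has_sum (-b)) A" using assms(2) by (simp add: has_sum_uminus)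
  from has_sum_add[OF assms(1) this] show ?thesis by simp
qed

lemma tail_small:
  fixes g :: "'a \<Rightarrow> real"
  assumes "g summable_on UNIV" "e > 0"
  shows "\<forall>\<^sub>F A in finite_subsets_at_top UNIV. infsum g (-A) < e"
proof -
  have "(sum g \<longlongrightarrow> infsum g UNIV) (finite_subsets_at_top UNIV)"
    using assms(1) has_sum_def has_sum_infsum by blast
  then have dist: "\<forall>\<^sub>F A in finite_subsets_at_top UNIV. dist (sum g A) (infsum g UNIV) < e"
    using tendstoD assms(2) by blast
  have fin: "\<forall>\<^sub>F A in finite_subsets_at_top UNIV. finite A"
    by (rule eventually_finite_subsets_at_top_weakI) auto
  show ?thesis
  proof (rule eventually_mono[OF eventually_conj[OF fin dist]])
    fix A assume A: "finite A \<and> dist (sum g A) (infsum g UNIV) < e"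
    have "infsum g (-A) = infsum g UNIV - infsum g A"
      using infsum_Diff[of g UNIV A] A assms(1) by (simp add: Compl_eq_Diff_UNIV)
    also have "\<dots> = infsum g UNIV - sum g A" using A by simp
    finally show "infsum g (-A) < e" using A by (auto simp: dist_real_def abs_less_iff)
  qed
qed

lemma unif_tail:
  fixes f :: "'x \<Rightarrow> 'a \<Rightarrow> 'b::banach" and g :: "'a \<Rightarrow> real"
  assumes g: "g summable_on UNIV" and bnd: "\<And>x a. x \<in> S \<Longrightarrow> norm (f x a) \<le> g a" and "e > 0"
  shows "\<forall>\<^sub>F A in finite_subsets_at_top UNIV. \<forall>x\<in>S. dist (\<Sum>a\<in>A. f x a) (\<Sum>\<^sub>\<infinity>a. f x a) < e"
proof -
  have fin: "\<forall>\<^sub>F A in finite_subsets_at_top UNIV. finite A"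
    by (rule eventually_finite_subsets_at_top_weakI) auto
  show ?thesis
  proof (rule eventually_mono[OF eventually_conj[OF fin tail_small[OF g \<open>e > 0\<close>]]])
    fix A assume A: "finite A \<and> infsum g (-A) < e"
    show "\<forall>x\<in>S. dist (\<Sum>a\<in>A. f x a) (\<Sum>\<^sub>\<infinity>a. f x a) < e"
    proof
      fix x assume x: "x \<in> S"
      have fabs: "(\<lambda>a. norm (f x a)) summable_on UNIV"
        by (rule Infinite_Sum.abs_summable_on_comparison_test'[OF g]) (use bnd[OF x] in \<open>force\<close>)
      have fs: "f x summable_on UNIV" using abs_summable_summable[OF fabs] .
      have fsA: "f x summable_on (-A)" by (rule summable_on_subset_banach[OF fs]) auto
      have nfsA: "(\<lambda>a. norm (f x a)) summable_on (-A)" by (rule summable_on_subset_banach[OF fabs]) auto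
      have gA: "g summable_on (-A)" by (rule summable_on_subset_banach[OF g]) auto
      have "infsum (f x) (-A) = infsum (f x) UNIV - infsum (f x) A"
        using infsum_Diff[of "f x" UNIV A] A fs by (simp add: Compl_eq_Diff_UNIV)
      then have eq: "dist (\<Sum>a\<in>A. f x a) (\<Sum>\<^sub>\<infinity>a. f x a) = norm (infsum (f x) (-A))"
        using A by (simp add: dist_norm norm_minus_commute)
      have "norm (infsum (f x) (-A)) \<le> infsum (\<lambda>a. norm (f x a)) (-A)"
        by (rule norm_infsum_bound) (use nfsA in simp)
      also have "\<dots> \<le> infsum g (-A)"
        by (rule infsum_mono[OF nfsA gA]) (use bnd[OF x] in auto)
      finally show "dist (\<Sum>a\<in>A. f x a) (\<Sum>\<^sub>\<infinity>a. f x a) < e" using eq A by simp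
    qed
  qed
qed

lemma mmon_bound:
  fixes w :: "complex^'n::finite"
  assumes "\<And>k. norm (w$k) \<le> s"
  shows "norm (mmon \<beta> w) \<le> s ^ mlen \<beta>"
proof -
  have "norm (mmon \<beta> w) = prod (\<lambda>k. norm (w$k) ^ \<beta> k) UNIV"
    by (simp add: mmon_def prod_norm[symmetric] norm_power)
  also have "\<dots> \<le> prod (\<lambda>k. s ^ \<beta> k) UNIV"
    by (rule prod_mono) (use assms in \<open>auto intro: power_mono\<close>)
  finally show ?thesis by (simp add: mlen_power)
qed



definition Dj :: "'n::finite \<Rightarrow> (('n\<Rightarrow>nat) \<Rightarrow> complex) \<Rightarrow> ('n\<Rightarrow>nat) \<Rightarrow> complex" where
  "Dj j d \<beta> = of_nat (Suc (\<beta> j)) * d (\<beta>(j := Suc (\<beta> j)))"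

lemma mmon_split:
  fixes z :: "complex^'n::finite"
  shows "mmon \<beta> z = (z$j) ^ \<beta> j * prod (\<lambda>k. (z$k) ^ \<beta> k) (-{j})"
  unfolding mmon_def by (subst prod.remove[of UNIV j]) (auto simp: Compl_eq_Diff_UNIV)

lemma mmon_axis:
  fixes z :: "complex^'n::finite"
  shows "mmon \<beta> (z + axis j t) = (z$j + t) ^ \<beta> j * prod (\<lambda>k. (z$k) ^ \<beta> k) (-{j})"
proof -
  have "mmon \<beta> (z + axis j t) = ((z + axis j t)$j) ^ \<beta> j * prod (\<lambda>k. ((z + axis j t)$k) ^ \<beta> k) (-{j})"
    by (rule mmon_split)
  also have "\<dots> = (z$j + t) ^ \<beta> j * prod (\<lambda>k. (z$k) ^ \<beta> k) (-{j})"
    by (intro arg_cong2[where f="(*)"] prod.cong) (auto simp: axis_def)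
  finally show ?thesis .
qed

lemma norm_axis_c: "norm (axis j (t::complex) :: complex^'n::finite) = norm t"
proof -
  have "(\<Sum>i\<in>UNIV. (norm ((axis j t :: complex^'n)$i))\<^sup>2) = (\<Sum>i\<in>UNIV. if i = j then (norm t)\<^sup>2 else 0)"
    by (rule sum.cong) (auto simp: axis_def)
  then show ?thesis unfolding norm_vec_def L2_set_def by simp
qed

lemma norm_axis_le:
  fixes z :: "complex^'n::finite"
  assumes "norm t \<le> r"
  shows "norm (z + axis j t) \<le> norm z + r"
  using norm_triangle_ineq[of z "axis j t"] assms by (simp add: norm_axis_c)

lemma bij_sh: "bij_betw (\<lambda>\<gamma>::'n\<Rightarrow>nat. \<gamma>(j := Suc (\<gamma> j))) UNIV {\<beta>. \<beta> j \<noteq> 0}"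
  by (rule bij_betw_byWitness[where f'="\<lambda>\<beta>. \<beta>(j := \<beta> j - 1)"]) auto

lemma pdiff_hasderiv:
  fixes z :: "complex^'n::finite"
  assumes good: "goodR R d" and z: "norm z < R"
  shows "((\<lambda>t. mps d (z + axis j t)) has_field_derivative mps (Dj j d) z) (at 0)"
proof -
  obtain s where s: "norm z < s" "s < R" using z dense by blast
  have s0: "0 < s" using s norm_ge_zero[of z] by linarith
  define r where "r = s - norm z"
  have r0: "0 < r" using s by (simp add: r_def)
  define P where "P \<beta> = prod (\<lambda>k. (z$k) ^ \<beta> k) (-{j})" for \<beta>
  define f where "f A t = (\<Sum>\<beta>\<in>A. d \<beta> * ((z$j + t) ^ \<beta> j * P \<beta>))" for A t
  define f' where "f' A t = (\<Sum>\<beta>\<in>A. d \<beta> * (of_nat (\<beta> j) * (z$j + t) ^ (\<beta> j - 1) * P \<beta>))" for A t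
  have gs: "(\<lambda>\<beta>. norm (d \<beta>) * s ^ mlen \<beta>) summable_on UNIV" using good s s0 by (auto simp: goodR_def)
  have der: "(f A has_field_derivative f' A t) (at t)" for A t
    unfolding f_def f'_def
  proof (rule DERIV_sum)
    fix \<beta> assume "\<beta> \<in> A"
    show "((\<lambda>t. d \<beta> * ((z$j + t) ^ \<beta> j * P \<beta>)) has_field_derivative
          d \<beta> * (of_nat (\<beta> j) * (z$j + t) ^ (\<beta> j - 1) * P \<beta>)) (at t)"
      by (rule derivative_eq_intros refl | simp)+
  qed
  have bnd: "norm (d \<beta> * mmon \<beta> (z + axis j t)) \<le> norm (d \<beta>) * s ^ mlen \<beta>" if "t \<in> cball 0 r" for \<beta> t
  proof -
    have "norm (z + axis j t) \<le> s" using norm_axis_le[of t r z j] that by (simp add: r_def)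
    then have "norm ((z + axis j t)$k) \<le> s" for k
      using Finite_Cartesian_Product.norm_nth_le[of "z + axis j t" k] by linarith
    then have "norm (mmon \<beta> (z + axis j t)) \<le> s ^ mlen \<beta>" by (rule mmon_bound)
    then show ?thesis by (simp add: norm_mult mult_left_mono)
  qed
  have ul: "uniform_limit (cball 0 r) f (\<lambda>t. mps d (z + axis j t)) (finite_subsets_at_top UNIV)"
    unfolding uniform_limit_iff
  proof (intro allI impI)
    fix e :: real assume "e > 0"
    from unif_tail[OF gs, of "cball 0 r" "\<lambda>t \<beta>. d \<beta> * mmon \<beta> (z + axis j t)", OF bnd this]
    show "\<forall>\<^sub>F A in finite_subsets_at_top UNIV. \<forall>x\<in>cball 0 r. dist (f A x) (mps d (z + axis j x)) < e"
      by (simp add: f_def mps_def mmon_axis P_def)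
  qed
  have cont: "\<forall>\<^sub>F A in finite_subsets_at_top UNIV. continuous_on (cball 0 r) (f A) \<and>
       (\<forall>w\<in>ball 0 r. (f A has_field_derivative f' A w) (at w))"
  proof (intro always_eventually allI conjI ballI der)
    fix A show "continuous_on (cball 0 r) (f A)"
      by (intro continuous_at_imp_continuous_on ballI DERIV_isCont[OF der])
  qed
  obtain g' where g': "\<And>w. w \<in> ball 0 r \<Longrightarrow> ((\<lambda>t. mps d (z + axis j t)) has_field_derivative g' w) (at w) \<and>
        ((\<lambda>A. f' A w) \<longlongrightarrow> g' w) (finite_subsets_at_top UNIV)"
  proof -
    have ntriv: "\<not> trivial_limit (finite_subsets_at_top (UNIV::('n\<Rightarrow>nat) set))" by simp
    show ?thesis using has_complex_derivative_uniform_limit[OF cont ul ntriv r0] that by blast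
  qed
  define T where "T \<beta> = d \<beta> * (of_nat (\<beta> j) * (z$j) ^ (\<beta> j - 1) * P \<beta>)" for \<beta>
  have hs: "(T has_sum g' 0) UNIV"
    using g'[of 0] r0 by (simp add: has_sum_def f'_def T_def[abs_def])
  then have hs1: "(T has_sum g' 0) {\<beta>. \<beta> j \<noteq> 0}"
    by (subst has_sum_cong_neutral[where T=UNIV]) (auto simp: T_def)
  have hs2: "((\<lambda>\<gamma>. Dj j d \<gamma> * mmon \<gamma> z) has_sum g' 0) UNIV"
  proof -
    have "((\<lambda>\<gamma>. T (\<gamma>(j := Suc (\<gamma> j)))) has_sum g' 0) UNIV"
      using has_sum_reindex_bij_betw[OF bij_sh, of T] hs1 by blast
    moreover have "P (\<gamma>(j := Suc (\<gamma> j))) = P \<gamma>" for \<gamma>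
      unfolding P_def by (rule prod.cong) auto
    ultimately show ?thesis
      by (simp add: T_def Dj_def mmon_split[of _ z j] P_def[symmetric] mult_ac)
  qed
  have "mps (Dj j d) z = g' 0" unfolding mps_def using hs2 by (rule infsumI)
  then show ?thesis using g'[of 0] r0 by simp
qed



lemma kq_bound:
  fixes q :: real assumes "0 \<le> q" "q < 1"
  shows "real m * q ^ m \<le> 1 / (1 - q)"
proof -
  have "real m * q ^ m = (\<Sum>i<m. q ^ m)" by simp
  also have "\<dots> \<le> (\<Sum>i<m. q ^ i)"
    by (rule sum_mono) (use assms in \<open>auto intro: power_decreasing\<close>)
  also have "\<dots> \<le> (\<Sum>i\<in>{..m}. q ^ i)"
    by (rule sum_mono2) (use assms in auto)
  also have "\<dots> \<le> 1 / (1 - q)" by (rule geom_le[OF assms])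
  finally show ?thesis .
qed

lemma mlen_remove: "mlen \<beta> = \<beta> j + sum \<beta> (-{j})"
  unfolding mlen_def by (subst sum.remove[of UNIV j]) (auto simp: Compl_eq_Diff_UNIV)

lemma mlen_upd: "mlen (\<beta>(j := k)) = k + sum \<beta> (-{j})"
proof -
  have "mlen (\<beta>(j := k)) = (\<beta>(j := k)) j + sum (\<beta>(j := k)) (-{j})" by (rule mlen_remove)
  also have "sum (\<beta>(j := k)) (-{j}) = sum \<beta> (-{j})" by (rule sum.cong) auto
  finally show ?thesis by (simp only: fun_upd_same)
qed

lemma mlen_ge: "\<beta> j \<le> mlen \<beta>"
  using mlen_remove[of \<beta> j] by simp

lemma cmod_one_of_nat[simp]: "cmod (1 + of_nat n) = 1 + real n"
  by (metis norm_of_nat of_nat_Suc)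

lemma goodR_Dj:
  assumes "goodR R d"
  shows "goodR R (Dj j d)"
  unfolding goodR_def
proof (intro allI impI)
  fix s :: real assume s: "0 < s \<and> s < R"
  define s' where "s' = (s + R) / 2"
  have s': "s < s'" "s' < R" using s by (auto simp: s'_def)
  define q where "q = s / s'"
  have q: "0 \<le> q" "q < 1" using s s' by (auto simp: q_def)
  have qs: "q * s' = s" using s s' by (simp add: q_def)
  have gs: "(\<lambda>\<beta>. norm (d \<beta>) * s' ^ mlen \<beta>) summable_on UNIV"
    using assms s s' by (auto simp: goodR_def)
  define C where "C = 1 / (s * (1 - q))"
  define h where "h \<beta> = real (\<beta> j) * norm (d \<beta>) * s ^ (mlen \<beta> - 1)" for \<beta>
  have h0: "h \<beta> \<ge> 0" for \<beta> using s by (simp add: h_def)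
  have hb: "norm (h \<beta>) \<le> C * (norm (d \<beta>) * s' ^ mlen \<beta>)" for \<beta>
  proof (cases "mlen \<beta> = 0")
    case True
    then have "\<beta> j = 0" using mlen_ge[of \<beta> j] by simp
    then show ?thesis using s s' q by (simp add: h_def C_def)
  next
    case False
    define m where "m = mlen \<beta>"
    have m1: "m \<ge> 1" using False by (simp add: m_def)
    have "s ^ (m - 1) * s = s ^ m" using m1 by (metis Suc_diff_le diff_Suc_1 power_Suc2)
    also have "s ^ m = q ^ m * s' ^ m" using qs by (metis power_mult_distrib)
    finally have sm: "s ^ (m - 1) = q ^ m * s' ^ m / s" using s by (simp add: field_simps)
    have "norm (h \<beta>) = real (\<beta> j) * norm (d \<beta>) * s ^ (m - 1)" using h0[of \<beta>] by (simp add: h_def m_def)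
    also have "\<dots> \<le> real m * norm (d \<beta>) * s ^ (m - 1)"
      using mlen_ge[of \<beta> j] s by (intro mult_right_mono) (auto simp: m_def)
    also have "\<dots> = (real m * q ^ m) * (norm (d \<beta>) * s' ^ m) / s" unfolding sm by (simp add: field_simps)
    also have "\<dots> \<le> (1 / (1 - q)) * (norm (d \<beta>) * s' ^ m) / s"
      using kq_bound[OF q, of m] s s' by (intro divide_right_mono mult_right_mono) auto
    also have "\<dots> = C * (norm (d \<beta>) * s' ^ mlen \<beta>)" by (simp add: C_def m_def)
    finally show ?thesis .
  qed
  have "(\<lambda>\<beta>. norm (h \<beta>)) summable_on UNIV"
    by (rule Infinite_Sum.abs_summable_on_comparison_test'[OF summable_on_cmult_right[OF gs]]) (use hb in auto)
  then have hs: "h summable_on UNIV" using h0 by simp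
  then have hs1: "h summable_on {\<beta>. \<beta> j \<noteq> 0}" by (rule summable_on_subset_banach) auto
  have "(\<lambda>\<gamma>. h (\<gamma>(j := Suc (\<gamma> j)))) summable_on UNIV"
    using summable_on_reindex_bij_betw[OF bij_sh, of h] hs1 by blast
  moreover have "h (\<gamma>(j := Suc (\<gamma> j))) = norm (Dj j d \<gamma>) * s ^ mlen \<gamma>" for \<gamma>
    by (simp add: h_def Dj_def norm_mult mlen_upd mlen_remove[of \<gamma> j])
  ultimately show "(\<lambda>\<gamma>. norm (Dj j d \<gamma>) * s ^ mlen \<gamma>) summable_on UNIV" by simp
qed

lemma pdiff_mps:
  fixes G :: "complex^'n::finite \<Rightarrow> complex"
  assumes good: "goodR R d" and G: "\<forall>z. norm z < R \<longrightarrow> G z = mps d z" and z: "norm z < R"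
  shows "pdiff j G z = mps (Dj j d) z"
proof -
  have ev: "\<forall>\<^sub>F t in nhds 0. G (z + axis j t) = mps d (z + axis j t)"
    unfolding eventually_nhds_metric
  proof (intro exI conjI allI impI)
    show "0 < R - norm z" using z by simp
    fix t :: complex assume "dist t 0 < R - norm z"
    then have "norm (z + axis j t) < R"
      using norm_axis_le[of t "norm t" z j] by simp
    then show "G (z + axis j t) = mps d (z + axis j t)" using G by blast
  qed
  have "pdiff j G z = deriv (\<lambda>t. mps d (z + axis j t)) 0"
    unfolding pdiff_def by (rule deriv_cong_ev[OF ev refl])
  also have "\<dots> = mps (Dj j d) z"
    by (rule DERIV_imp_deriv[OF pdiff_hasderiv[OF good z]])
  finally show ?thesis .
qed

lemma pdiff_pow:
  fixes G :: "complex^'n::finite \<Rightarrow> complex"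
  assumes "goodR R d" "\<forall>z. norm z < R \<longrightarrow> G z = mps d z"
  shows "goodR R ((Dj j ^^ k) d) \<and> (\<forall>z. norm z < R \<longrightarrow> (pdiff j ^^ k) G z = mps ((Dj j ^^ k) d) z)"
proof (induction k)
  case 0
  then show ?case using assms by simp
next
  case (Suc k)
  from Suc have g: "goodR R ((Dj j ^^ k) d)" and e: "\<forall>z. norm z < R \<longrightarrow> (pdiff j ^^ k) G z = mps ((Dj j ^^ k) d) z"
    by auto
  show ?case by (simp add: goodR_Dj[OF g] pdiff_mps[OF g e])
qed

lemma pdiff_fold:
  fixes G :: "complex^'n::finite \<Rightarrow> complex"
  assumes "goodR R d" "\<forall>z. norm z < R \<longrightarrow> G z = mps d z"
  shows "goodR R (foldr (\<lambda>j d. (Dj j ^^ \<alpha> j) d) js d) \<and>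
    (\<forall>z. norm z < R \<longrightarrow> foldr (\<lambda>j G. (pdiff j ^^ \<alpha> j) G) js G z = mps (foldr (\<lambda>j d. (Dj j ^^ \<alpha> j) d) js d) z)"
proof (induction js)
  case Nil
  then show ?case using assms by simp
next
  case (Cons j js)
  from Cons have g: "goodR R (foldr (\<lambda>j d. (Dj j ^^ \<alpha> j) d) js d)"
    and e: "\<forall>z. norm z < R \<longrightarrow> foldr (\<lambda>j G. (pdiff j ^^ \<alpha> j) G) js G z = mps (foldr (\<lambda>j d. (Dj j ^^ \<alpha> j) d) js d) z"
    by auto
  show ?case using pdiff_pow[OF g e, where j=j and k="\<alpha> j"] by simp
qed

lemma Dj_pow: "(Dj j ^^ k) d \<beta> = pochhammer (of_nat (Suc (\<beta> j))) k * d (\<beta>(j := \<beta> j + k))"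
proof (induction k arbitrary: \<beta>)
  case 0
  then show ?case by simp
next
  case (Suc k)
  have "(Dj j ^^ Suc k) d \<beta> = of_nat (Suc (\<beta> j)) * ((Dj j ^^ k) d) (\<beta>(j := Suc (\<beta> j)))"
    by (simp add: Dj_def)
  also have "\<dots> = of_nat (Suc (\<beta> j)) * (pochhammer (of_nat (Suc (Suc (\<beta> j)))) k * d (\<beta>(j := Suc (\<beta> j) + k)))"
    using Suc[of "\<beta>(j := Suc (\<beta> j))"] by (simp only: fun_upd_same fun_upd_upd)
  also have "\<dots> = pochhammer (of_nat (Suc (\<beta> j))) (Suc k) * d (\<beta>(j := \<beta> j + Suc k))"
  proof -
    have "pochhammer (of_nat (Suc (\<beta> j)) :: complex) (Suc k) = of_nat (Suc (\<beta> j)) * pochhammer (of_nat (Suc (Suc (\<beta> j)))) k"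
      by (simp add: pochhammer_rec add_ac)
    moreover have "Suc (\<beta> j) + k = \<beta> j + Suc k" by simp
    ultimately show ?thesis by (metis mult.assoc)
  qed
  finally show ?case .
qed

lemma Dj_fold:
  assumes "distinct js"
  shows "foldr (\<lambda>j d. (Dj j ^^ \<alpha> j) d) js d \<beta> =
    (\<Prod>j\<in>set js. pochhammer (of_nat (Suc (\<beta> j))) (\<alpha> j)) * d (\<lambda>i. if i \<in> set js then \<beta> i + \<alpha> i else \<beta> i)"
  using assms
proof (induction js arbitrary: \<beta>)
  case Nil
  then show ?case by simp
next
  case (Cons j js)
  have nj: "j \<notin> set js" and dj: "distinct js" using Cons.prems by auto
  have "foldr (\<lambda>j d. (Dj j ^^ \<alpha> j) d) (j # js) d \<beta> =
     pochhammer (of_nat (Suc (\<beta> j))) (\<alpha> j) * foldr (\<lambda>j d. (Dj j ^^ \<alpha> j) d) js d (\<beta>(j := \<beta> j + \<alpha> j))"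
    by (simp add: Dj_pow)
  also have "\<dots> = pochhammer (of_nat (Suc (\<beta> j))) (\<alpha> j) *
     ((\<Prod>i\<in>set js. pochhammer (of_nat (Suc ((\<beta>(j := \<beta> j + \<alpha> j)) i))) (\<alpha> i)) *
      d (\<lambda>i. if i \<in> set js then (\<beta>(j := \<beta> j + \<alpha> j)) i + \<alpha> i else (\<beta>(j := \<beta> j + \<alpha> j)) i))"
    using Cons.IH[OF dj] by simp
  also have "(\<Prod>i\<in>set js. pochhammer (of_nat (Suc ((\<beta>(j := \<beta> j + \<alpha> j)) i))) (\<alpha> i)) =
       (\<Prod>i\<in>set js. pochhammer (of_nat (Suc (\<beta> i))) (\<alpha> i))"
    by (rule prod.cong) (use nj in auto)
  also have "(\<lambda>i. if i \<in> set js then (\<beta>(j := \<beta> j + \<alpha> j)) i + \<alpha> i else (\<beta>(j := \<beta> j + \<alpha> j)) i) =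
      (\<lambda>i. if i \<in> set (j # js) then \<beta> i + \<alpha> i else \<beta> i)"
    using nj by auto
  finally show ?case using nj by (simp add: mult_ac)
qed

lemma coord_list_props: "distinct (coord_list :: 'n::finite list) \<and> set (coord_list :: 'n list) = UNIV"
proof -
  have "\<exists>xs::'n list. distinct xs \<and> set xs = UNIV" using finite_distinct_list[of "UNIV::'n set"] by auto
  then show ?thesis unfolding coord_list_def by (rule someI_ex)
qed

lemma mps_zero: "mps d (0::complex^'n::finite) = d (\<lambda>_. 0)"
proof -
  have "mps d 0 = infsum (\<lambda>\<beta>. d \<beta> * mmon \<beta> (0::complex^'n)) {\<lambda>_. 0}"
    unfolding mps_def
  proof (rule infsum_cong_neutral)
    fix \<beta> :: "'n \<Rightarrow> nat" assume "\<beta> \<in> UNIV - {\<lambda>_. 0}"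
    then obtain j where "\<beta> j \<noteq> 0" by auto
    then have "mmon \<beta> (0::complex^'n) = 0" unfolding mmon_def by (intro prod_zero) auto
    then show "d \<beta> * mmon \<beta> 0 = 0" by simp
  qed auto
  also have "\<dots> = d (\<lambda>_. 0)" by (simp add: mmon_def)
  finally show ?thesis .
qed

lemma mderiv_mps:
  assumes "goodR R d" "R > 0"
  shows "mderiv \<alpha> (mps d) (0::complex^'n::finite) = of_nat (mfact \<alpha>) * d \<alpha>"
proof -
  have "mderiv \<alpha> (mps d) 0 = mps (foldr (\<lambda>j d. (Dj j ^^ \<alpha> j) d) coord_list d) (0::complex^'n)"
    using pdiff_fold[OF assms(1), of "mps d" \<alpha> coord_list] assms(2) unfolding mderiv_def by simp
  also have "\<dots> = foldr (\<lambda>j d. (Dj j ^^ \<alpha> j) d) coord_list d (\<lambda>_. 0)" by (rule mps_zero)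
  also have "\<dots> = (\<Prod>j\<in>UNIV. pochhammer 1 (\<alpha> j)) * d \<alpha>"
  proof -
    have cl: "distinct (coord_list::'n list)" "set (coord_list::'n list) = UNIV" using coord_list_props by auto
    show ?thesis by (simp add: Dj_fold[OF cl(1)] cl(2))
  qed
  also have "\<dots> = of_nat (mfact \<alpha>) * d \<alpha>"
    by (simp add: mfact_def pochhammer_fact[symmetric] of_nat_prod)
  finally show ?thesis .
qed



definition pc :: "('n::finite \<Rightarrow> nat) \<Rightarrow> 'n \<Rightarrow> complex^'n \<Rightarrow> complex" where
  "pc \<beta> k x = of_nat (\<beta> k) * (x$k) ^ (\<beta> k - 1) * prod (\<lambda>i. (x$i) ^ \<beta> i) (-{k})"

definition Dm :: "('n::finite \<Rightarrow> nat) \<Rightarrow> complex^'n \<Rightarrow> complex^'n \<Rightarrow> complex" where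
  "Dm \<beta> x h = (\<Sum>k\<in>UNIV. pc \<beta> k x * h$k)"

lemma mmon_hasderiv:
  fixes x :: "complex^'n::finite"
  shows "(mmon \<beta> has_derivative Dm \<beta> x) (at x within S)"
proof -
  have d1: "((\<lambda>x::complex^'n. (x$i) ^ \<beta> i) has_derivative (\<lambda>h. of_nat (\<beta> i) * h$i * (x$i) ^ (\<beta> i - 1))) (at x within S)" for i
    by (rule has_derivative_power) (rule bounded_linear_imp_has_derivative[OF bounded_linear_vec_nth])
  have "(mmon \<beta> has_derivative (\<lambda>h. \<Sum>i\<in>UNIV. of_nat (\<beta> i) * h$i * (x$i) ^ (\<beta> i - 1) * (\<Prod>j\<in>UNIV - {i}. (x$j) ^ \<beta> j))) (at x within S)"
    unfolding mmon_def by (rule has_derivative_prod) (rule d1)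
  moreover have "(\<lambda>h. \<Sum>i\<in>UNIV. of_nat (\<beta> i) * h$i * (x$i) ^ (\<beta> i - 1) * (\<Prod>j\<in>UNIV - {i}. (x$j) ^ \<beta> j)) = Dm \<beta> x"
  proof (rule ext)
    fix h :: "complex^'n"
    have "of_nat (\<beta> i) * h$i * (x$i) ^ (\<beta> i - 1) * (\<Prod>j\<in>UNIV - {i}. (x$j) ^ \<beta> j) = pc \<beta> i x * h$i" for i
      unfolding pc_def Compl_eq_Diff_UNIV by (simp only: mult_ac)
    note pi = this
    show "(\<Sum>i\<in>UNIV. of_nat (\<beta> i) * h$i * (x$i) ^ (\<beta> i - 1) * (\<Prod>j\<in>UNIV - {i}. (x$j) ^ \<beta> j)) = Dm \<beta> x h"
      unfolding Dm_def by (rule sum.cong[OF refl], rule pi)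
  qed
  ultimately show ?thesis by simp
qed

lemma pc_bound:
  fixes x :: "complex^'n::finite"
  assumes "\<And>i. norm (x$i) \<le> s" "0 \<le> s"
  shows "norm (pc \<beta> k x) \<le> real (\<beta> k) * s ^ (mlen \<beta> - 1)"
proof (cases "\<beta> k = 0")
  case True
  then show ?thesis by (simp add: pc_def)
next
  case False
  have "norm (pc \<beta> k x) = real (\<beta> k) * (norm (x$k) ^ (\<beta> k - 1) * prod (\<lambda>i. norm (x$i) ^ \<beta> i) (-{k}))"
    by (simp add: pc_def norm_mult norm_power prod_norm[symmetric])
  also have "\<dots> \<le> real (\<beta> k) * (s ^ (\<beta> k - 1) * prod (\<lambda>i. s ^ \<beta> i) (-{k}))"
  proof (rule mult_left_mono[OF mult_mono])
    show "norm (x$k) ^ (\<beta> k - 1) \<le> s ^ (\<beta> k - 1)" using assms by (intro power_mono) auto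
    show "prod (\<lambda>i. norm (x$i) ^ \<beta> i) (-{k}) \<le> prod (\<lambda>i. s ^ \<beta> i) (-{k})"
      using assms by (intro prod_mono conjI power_mono) auto
  qed (use assms in \<open>auto intro: prod_nonneg\<close>)
  also have "s ^ (\<beta> k - 1) * prod (\<lambda>i. s ^ \<beta> i) (-{k}) = s ^ (\<beta> k - 1) * s ^ sum \<beta> (-{k})"
    by (simp add: power_sum)
  also have "\<dots> = s ^ (mlen \<beta> - 1)"
  proof -
    have m: "\<beta> k - 1 + sum \<beta> (-{k}) = mlen \<beta> - 1" using False mlen_remove[of \<beta> k] by simp
    show ?thesis by (simp only: power_add[symmetric] m)
  qed
  finally show ?thesis .
qed

lemma h_summable:
  assumes "goodR R d" "0 < s" "s < R"
  shows "(\<lambda>\<beta>. real (\<beta> j) * norm (d \<beta>) * s ^ (mlen \<beta> - 1)) summable_on UNIV"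
proof -
  define s' where "s' = (s + R) / 2"
  have s': "s < s'" "s' < R" using assms by (auto simp: s'_def)
  define q where "q = s / s'"
  have q: "0 \<le> q" "q < 1" using assms s' by (auto simp: q_def)
  have qs: "q * s' = s" using assms s' by (simp add: q_def)
  have gs: "(\<lambda>\<beta>. norm (d \<beta>) * s' ^ mlen \<beta>) summable_on UNIV"
    using assms s' by (auto simp: goodR_def)
  define C where "C = 1 / (s * (1 - q))"
  define h where "h \<beta> = real (\<beta> j) * norm (d \<beta>) * s ^ (mlen \<beta> - 1)" for \<beta>
  have h0: "h \<beta> \<ge> 0" for \<beta> using assms by (simp add: h_def)
  have hb: "norm (h \<beta>) \<le> C * (norm (d \<beta>) * s' ^ mlen \<beta>)" for \<beta>
  proof (cases "mlen \<beta> = 0")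
    case True
    then have "\<beta> j = 0" using mlen_ge[of \<beta> j] by simp
    then show ?thesis using assms s' q by (simp add: h_def C_def)
  next
    case False
    define m where "m = mlen \<beta>"
    have m1: "m \<ge> 1" using False by (simp add: m_def)
    have "s ^ (m - 1) * s = s ^ m" using m1 by (metis Suc_diff_le diff_Suc_1 power_Suc2)
    also have "s ^ m = q ^ m * s' ^ m" using qs by (metis power_mult_distrib)
    finally have sm: "s ^ (m - 1) = q ^ m * s' ^ m / s" using assms by (simp add: field_simps)
    have "norm (h \<beta>) = real (\<beta> j) * norm (d \<beta>) * s ^ (m - 1)" using h0[of \<beta>] by (simp add: h_def m_def)
    also have "\<dots> \<le> real m * norm (d \<beta>) * s ^ (m - 1)"
      using mlen_ge[of \<beta> j] assms by (intro mult_right_mono) (auto simp: m_def)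
    also have "\<dots> = (real m * q ^ m) * (norm (d \<beta>) * s' ^ m) / s" unfolding sm by (simp add: field_simps)
    also have "\<dots> \<le> (1 / (1 - q)) * (norm (d \<beta>) * s' ^ m) / s"
      using kq_bound[OF q, of m] assms s' by (intro divide_right_mono mult_right_mono) auto
    also have "\<dots> = C * (norm (d \<beta>) * s' ^ mlen \<beta>)" by (simp add: C_def m_def)
    finally show ?thesis .
  qed
  have "(\<lambda>\<beta>. norm (h \<beta>)) summable_on UNIV"
    by (rule Infinite_Sum.abs_summable_on_comparison_test'[OF summable_on_cmult_right[OF gs]]) (use hb in auto)
  then show ?thesis using h0 by (simp add: h_def)
qed

definition En :: "nat \<Rightarrow> ('n::finite \<Rightarrow> nat) set" where
  "En n = from_nat ` {..<n}"

lemma finite_En[simp]: "finite (En n)"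
  by (simp add: En_def)

lemma seq_from_fin:
  assumes "\<forall>\<^sub>F A in finite_subsets_at_top (UNIV :: ('n::finite \<Rightarrow> nat) set). P A"
  shows "\<forall>\<^sub>F n in sequentially. P (En n)"
proof -
  have "\<exists>X. finite X \<and> X \<subseteq> UNIV \<and> (\<forall>Y. finite Y \<and> X \<subseteq> Y \<and> Y \<subseteq> UNIV \<longrightarrow> P Y)"
    using assms by (simp only: eventually_finite_subsets_at_top)
  then obtain X where X0: "finite X" "\<forall>Y. finite Y \<and> X \<subseteq> Y \<and> Y \<subseteq> UNIV \<longrightarrow> P Y"
    by (elim exE conjE) (rule that)
  have X: "finite X" "\<And>Y. finite Y \<Longrightarrow> X \<subseteq> Y \<Longrightarrow> P Y" using X0 by auto
  define N where "N = Suc (Max (insert 0 (to_nat ` X)))"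
  have "X \<subseteq> En n" if "n \<ge> N" for n
  proof
    fix \<beta> assume "\<beta> \<in> X"
    then have "to_nat \<beta> \<le> Max (insert 0 (to_nat ` X))" using X(1) by (intro Max_ge) auto
    then have "to_nat \<beta> < n" using that by (simp add: N_def)
    then show "\<beta> \<in> En n" unfolding En_def by (intro image_eqI[of _ _ "to_nat \<beta>"]) auto
  qed
  note sub = this
  show ?thesis
  proof (rule eventually_sequentiallyI[of N])
    fix n assume "N \<le> n"
    then show "P (En n)" by (intro X(2) finite_En sub)
  qed
qed

lemma seq_tendsto_infsum:
  fixes F :: "('n::finite \<Rightarrow> nat) \<Rightarrow> 'b::banach"
  assumes "F summable_on UNIV"
  shows "(\<lambda>n. \<Sum>\<beta>\<in>En n. F \<beta>) \<longlonglongrightarrow> infsum F UNIV"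
proof (rule tendstoI)
  fix e :: real assume "e > 0"
  have "(sum F \<longlongrightarrow> infsum F UNIV) (finite_subsets_at_top UNIV)"
    using assms has_sum_def has_sum_infsum by blast
  then have "\<forall>\<^sub>F A in finite_subsets_at_top UNIV. dist (sum F A) (infsum F UNIV) < e"
    using tendstoD \<open>e > 0\<close> by blast
  then show "\<forall>\<^sub>F n in sequentially. dist (\<Sum>\<beta>\<in>En n. F \<beta>) (infsum F UNIV) < e"
    by (rule seq_from_fin)
qed



lemma mps_hasderiv:
  fixes z :: "complex^'n::finite"
  assumes good: "goodR R d" and z: "norm z < R"
  shows "\<exists>a::complex^'n. (mps d has_derivative (\<lambda>v. \<Sum>k\<in>UNIV. a$k * v$k)) (at z)"
proof -
  obtain s where s: "norm z < s" "s < R" using z dense by blast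
  have s0: "0 < s" using s norm_ge_zero[of z] by linarith
  define S where "S = ball (0::complex^'n) s"
  have zS: "z \<in> S" using s by (simp add: S_def)
  have compS: "norm ((x::complex^'n)$i) \<le> s" if "x \<in> S" for x i
    using that Finite_Cartesian_Product.norm_nth_le[of x i] by (simp add: S_def)
  define Ak where "Ak k x = (\<Sum>\<^sub>\<infinity>\<beta>. d \<beta> * pc \<beta> k x)" for k x
  define g' where "g' x h = (\<Sum>k\<in>UNIV. Ak k x * h$k)" for x h
  define f where "f n x = (\<Sum>\<beta>\<in>En n. d \<beta> * mmon \<beta> x)" for n x
  define f' where "f' n x h = (\<Sum>\<beta>\<in>En n. d \<beta> * Dm \<beta> x h)" for n x h
  have gs: "(\<lambda>\<beta>. norm (d \<beta>) * s ^ mlen \<beta>) summable_on UNIV" using good s s0 by (auto simp: goodR_def)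
  have derf: "(f n has_derivative f' n x) (at x within S)" for n x
    unfolding f_def f'_def
    by (intro has_derivative_sum has_derivative_mult_right mmon_hasderiv)
  have nle: "\<forall>\<^sub>F n in sequentially. \<forall>x\<in>S. \<forall>h. norm (f' n x h - g' x h) \<le> e * norm h" if e: "e > 0" for e
  proof -
    define e' where "e' = e / real CARD('n)"
    have e': "e' > 0" using e by (simp add: e'_def)
    have "\<forall>\<^sub>F A in finite_subsets_at_top UNIV. \<forall>x\<in>S. dist (\<Sum>\<beta>\<in>A. d \<beta> * pc \<beta> k x) (Ak k x) < e'" for k
      unfolding Ak_def
    proof (rule unif_tail[OF h_summable[OF good s0 s(2), of k] _ e'])
      fix x \<beta> assume "x \<in> S"
      then have "norm (pc \<beta> k x) \<le> real (\<beta> k) * s ^ (mlen \<beta> - 1)"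
        using compS s0 by (intro pc_bound) auto
      then show "norm (d \<beta> * pc \<beta> k x) \<le> real (\<beta> k) * norm (d \<beta>) * s ^ (mlen \<beta> - 1)"
      proof -
        have "norm (d \<beta>) * norm (pc \<beta> k x) \<le> norm (d \<beta>) * (real (\<beta> k) * s ^ (mlen \<beta> - 1))"
          using \<open>norm (pc \<beta> k x) \<le> _\<close> by (rule mult_left_mono) simp
        then show ?thesis by (simp add: norm_mult mult_ac)
      qed
    qed
    then have "\<forall>\<^sub>F A in finite_subsets_at_top UNIV. \<forall>k. \<forall>x\<in>S. dist (\<Sum>\<beta>\<in>A. d \<beta> * pc \<beta> k x) (Ak k x) < e'"
      by (rule eventually_all_finite)
    then have ev: "\<forall>\<^sub>F n in sequentially. \<forall>k. \<forall>x\<in>S. dist (\<Sum>\<beta>\<in>En n. d \<beta> * pc \<beta> k x) (Ak k x) < e'"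
      by (rule seq_from_fin)
    show ?thesis
    proof (rule eventually_mono[OF ev], intro ballI allI)
      fix n x h
      assume H: "\<forall>k. \<forall>x\<in>S. dist (\<Sum>\<beta>\<in>En n. d \<beta> * pc \<beta> k x) (Ak k x) < e'" and x: "x \<in> S"
      have 1: "f' n x h = (\<Sum>k\<in>UNIV. (\<Sum>\<beta>\<in>En n. d \<beta> * pc \<beta> k x) * h$k)"
        unfolding f'_def Dm_def sum_distrib_left sum_distrib_right mult.assoc by (rule sum.swap)
      have eq: "f' n x h - g' x h = (\<Sum>k\<in>UNIV. ((\<Sum>\<beta>\<in>En n. d \<beta> * pc \<beta> k x) - Ak k x) * h$k)"
        unfolding 1 g'_def by (simp only: left_diff_distrib sum_subtractf)
      have "norm (f' n x h - g' x h) \<le> (\<Sum>k\<in>UNIV. norm (((\<Sum>\<beta>\<in>En n. d \<beta> * pc \<beta> k x) - Ak k x) * h$k))"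
        unfolding eq by (rule norm_sum)
      also have "\<dots> \<le> (\<Sum>k\<in>(UNIV::'n set). e' * norm h)"
      proof (rule sum_mono)
        fix k :: 'n
        have "norm ((\<Sum>\<beta>\<in>En n. d \<beta> * pc \<beta> k x) - Ak k x) \<le> e'"
          using H x by (auto simp: dist_norm less_imp_le)
        moreover have "norm (h$k) \<le> norm h" by (rule Finite_Cartesian_Product.norm_nth_le)
        ultimately show "norm (((\<Sum>\<beta>\<in>En n. d \<beta> * pc \<beta> k x) - Ak k x) * h$k) \<le> e' * norm h"
          unfolding norm_mult using e' by (intro mult_mono) auto
      qed
      also have "\<dots> = e * norm h" by (simp add: e'_def)
      finally show "norm (f' n x h - g' x h) \<le> e * norm h" .
    qed
  qed
  have summ: "(\<lambda>\<beta>. d \<beta> * mmon \<beta> x) summable_on UNIV" if "x \<in> S" for x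
  proof -
    have "(\<lambda>\<beta>. norm (d \<beta> * mmon \<beta> x)) summable_on UNIV"
    proof (rule Infinite_Sum.abs_summable_on_comparison_test'[OF gs])
      fix \<beta>
      have "norm (mmon \<beta> x) \<le> s ^ mlen \<beta>" using compS[OF that] by (rule mmon_bound)
      then show "norm (d \<beta> * mmon \<beta> x) \<le> norm (d \<beta>) * s ^ mlen \<beta>"
        by (simp add: norm_mult mult_left_mono)
    qed
    then show ?thesis by (rule abs_summable_summable)
  qed
  have lim: "(\<lambda>n. f n x) \<longlonglongrightarrow> mps d x" if "x \<in> S" for x
    unfolding f_def mps_def by (rule seq_tendsto_infsum[OF summ[OF that]])
  obtain g where g: "\<And>x. x \<in> S \<Longrightarrow> (\<lambda>n. f n x) \<longlonglongrightarrow> g x \<and> (g has_derivative g' x) (at x within S)"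
  proof -
    have cS: "convex S" unfolding S_def by (rule convex_ball)
    show ?thesis using has_derivative_sequence[OF cS derf nle zS lim[OF zS]] that by blast
  qed
  have geq: "g x = mps d x" if "x \<in> S" for x
    using g[OF that] lim[OF that] LIMSEQ_unique by blast
  have "(g has_derivative g' z) (at z)"
    using g[OF zS] at_within_open[OF zS] by (metis S_def open_ball)
  then have "(mps d has_derivative g' z) (at z)"
    by (rule has_derivative_transform_within_open[where s=S]) (use zS geq S_def in auto)
  moreover have "g' z = (\<lambda>v. \<Sum>k\<in>UNIV. (\<chi> k. Ak k z)$k * v$k)"
    by (simp add: g'_def[abs_def])
  ultimately show ?thesis by metis
qed

lemma mps_holo:
  assumes "goodR R d"
  shows "holo_on (ball (0::complex^'n::finite) R) (mps d)"
  unfolding holo_on_def using mps_hasderiv[OF assms] by auto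



lemma goodR_bounded:
  fixes c :: "('n::finite \<Rightarrow> nat) \<Rightarrow> complex"
  assumes "\<rho> > 0" "\<And>\<beta>. norm (c \<beta>) \<le> \<rho> ^ mlen \<beta>"
  shows "goodR (1 / \<rho>) c"
  unfolding goodR_def
proof (intro allI impI)
  fix s :: real assume s: "0 < s \<and> s < 1 / \<rho>"
  have q: "0 \<le> \<rho> * s" "\<rho> * s < 1" using s assms(1) by (auto simp: field_simps)
  have "(\<lambda>\<beta>. norm (norm (c \<beta>) * s ^ mlen \<beta>)) summable_on UNIV"
  proof (rule Infinite_Sum.abs_summable_on_comparison_test'[OF geom_summable[OF q]])
    fix \<beta> :: "'n \<Rightarrow> nat"
    have "norm (c \<beta>) * s ^ mlen \<beta> \<le> \<rho> ^ mlen \<beta> * s ^ mlen \<beta>"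
      using assms(2)[of \<beta>] s by (intro mult_right_mono) auto
    then show "norm (norm (c \<beta>) * s ^ mlen \<beta>) \<le> (\<rho> * s) ^ mlen \<beta>"
      using s by (simp add: power_mult_distrib)
  qed
  then show "(\<lambda>\<beta>. norm (c \<beta>) * s ^ mlen \<beta>) summable_on UNIV"
    using s by simp
qed

lemma mps_norm_bound:
  fixes z :: "complex^'n::finite"
  assumes "goodR R d" "norm z \<le> r" "0 < r" "r < R"
  shows "norm (mps d z) \<le> (\<Sum>\<^sub>\<infinity>\<beta>. norm (d \<beta>) * r ^ mlen \<beta>)"
proof -
  have gs: "(\<lambda>\<beta>. norm (d \<beta>) * r ^ mlen \<beta>) summable_on UNIV" using assms by (auto simp: goodR_def)
  have b: "norm (d \<beta> * mmon \<beta> z) \<le> norm (d \<beta>) * r ^ mlen \<beta>" for \<beta>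
  proof -
    have "norm (z$k) \<le> r" for k using Finite_Cartesian_Product.norm_nth_le[of z k] assms(2) by linarith
    then have "norm (mmon \<beta> z) \<le> r ^ mlen \<beta>" by (rule mmon_bound)
    then show ?thesis by (simp add: norm_mult mult_left_mono)
  qed
  have ns: "(\<lambda>\<beta>. norm (d \<beta> * mmon \<beta> z)) summable_on UNIV"
    by (rule Infinite_Sum.abs_summable_on_comparison_test'[OF gs]) (use b in auto)
  have "norm (mps d z) \<le> (\<Sum>\<^sub>\<infinity>\<beta>. norm (d \<beta> * mmon \<beta> z))"
    unfolding mps_def by (rule norm_infsum_bound) (use ns in simp)
  also have "\<dots> \<le> (\<Sum>\<^sub>\<infinity>\<beta>. norm (d \<beta>) * r ^ mlen \<beta>)"
    by (rule infsum_mono[OF ns gs]) (rule b)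
  finally show ?thesis .
qed

lemma exists_test_fn:
  fixes c :: "('n::finite \<Rightarrow> nat) \<Rightarrow> complex"
  assumes rho: "\<rho> > 0" and cb: "\<And>\<beta>. norm (c \<beta>) \<le> \<rho> ^ mlen \<beta>"
  shows "\<exists>\<Omega>' F. domain (\<Omega>' :: (complex^'n) set) \<and> bounded \<Omega>' \<and> 0 \<in> \<Omega>' \<and> F \<in> A2 \<Omega>' \<and>
           (\<forall>\<beta>. mderiv \<beta> F 0 = of_nat (mfact \<beta>) * c \<beta>)"
proof (intro exI conjI)
  define R where "R = 1 / \<rho>"
  have R0: "R > 0" using rho by (simp add: R_def)
  have good: "goodR R c" unfolding R_def by (rule goodR_bounded[OF rho cb])
  define r where "r = R / 2"
  have r: "0 < r" "r < R" using R0 by (auto simp: r_def)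
  show "domain (ball (0::complex^'n) r)"
    unfolding domain_def using r by auto
  show "bounded (ball (0::complex^'n) r)" by simp
  show "(0::complex^'n) \<in> ball 0 r" using r by simp
  show "\<forall>\<beta>. mderiv \<beta> (mps c) 0 = of_nat (mfact \<beta>) * c \<beta>"
    using mderiv_mps[OF good R0] by simp
  have hd: "\<exists>a::complex^'n. (mps c has_derivative (\<lambda>v. \<Sum>k\<in>UNIV. a$k * v$k)) (at z)" if "z \<in> ball 0 r" for z
    by (rule mps_hasderiv[OF good]) (use that r in auto)
  have holo: "holo_on (ball (0::complex^'n) r) (mps c)"
    unfolding holo_on_def using hd by auto
  have cont: "continuous_on (ball (0::complex^'n) r) (mps c)"
  proof (rule continuous_at_imp_continuous_on, rule ballI)
    fix z :: "complex^'n" assume "z \<in> ball 0 r"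
    then obtain a :: "complex^'n" where "(mps c has_derivative (\<lambda>v. \<Sum>k\<in>UNIV. a$k * v$k)) (at z)" using hd by blast
    then show "isCont (mps c) z" by (rule has_derivative_continuous)
  qed
  define M where "M = (\<Sum>\<^sub>\<infinity>\<beta>. norm (c \<beta>) * r ^ mlen \<beta>)"
  have "(\<lambda>z. (norm (mps c z))\<^sup>2) integrable_on ball (0::complex^'n) r"
  proof (rule measurable_bounded_by_integrable_imp_integrable_real)
    show "(\<lambda>z. (norm (mps c z))\<^sup>2) \<in> borel_measurable (lebesgue_on (ball (0::complex^'n) r))"
      by (rule continuous_imp_measurable_on_sets_lebesgue) (auto intro!: continuous_intros cont)
    show "(\<lambda>z. M\<^sup>2) integrable_on ball (0::complex^'n) r"
      by (rule integrable_on_const) simp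
    show "ball (0::complex^'n) r \<in> sets lebesgue" by auto
    fix z :: "complex^'n" assume "z \<in> ball 0 r"
    then have "norm (mps c z) \<le> M" unfolding M_def
      by (intro mps_norm_bound[OF good _ r]) auto
    then show "\<bar>(norm (mps c z))\<^sup>2\<bar> \<le> M\<^sup>2" by (simp add: power_mono)
  qed
  then show "mps c \<in> A2 (ball 0 r)" using holo by (simp add: A2_def)
qed



lemma holo_cont:
  assumes "holo_on S (f :: complex^'k::finite \<Rightarrow> complex)"
  shows "continuous_on S f"
proof (rule continuous_at_imp_continuous_on, rule ballI)
  fix z assume "z \<in> S"
  then obtain a :: "complex^'k" where "(f has_derivative (\<lambda>v. \<Sum>k\<in>UNIV. a$k * v$k)) (at z)"
    using assms unfolding holo_on_def by blast
  then show "isCont f z" by (rule has_derivative_continuous)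
qed

lemma mfact_pos: "mfact \<beta> > 0"
  unfolding mfact_def by (intro prod_pos) auto

lemma pairing_test:
  fixes F :: "complex^'n::finite \<Rightarrow> complex" and \<xi>' :: "('n \<Rightarrow> nat) \<Rightarrow> complex"
  assumes "\<And>\<beta>. mderiv \<beta> F 0 = of_nat (mfact \<beta>) * c \<beta>"
  shows "pairing \<xi>' F 0 = (\<Sum>\<^sub>\<infinity>\<beta>. \<xi>' \<beta> * c \<beta>)"
  unfolding pairing_def
proof (rule infsum_cong)
  fix \<beta> :: "'n \<Rightarrow> nat"
  have "of_nat (mfact \<beta>) \<noteq> (0::complex)" using mfact_pos[of \<beta>] by simp
  then show "\<xi>' \<beta> * mderiv \<beta> F 0 / of_nat (mfact \<beta>) = \<xi>' \<beta> * c \<beta>"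
    by (simp add: assms)
qed

lemma Phi_holo:
  fixes D :: "(complex^'m::finite) set" and \<xi> :: "complex^'m \<Rightarrow> ('n::finite \<Rightarrow> nat) \<Rightarrow> complex"
  assumes hyp: "\<forall>\<Omega>'::(complex^'n) set. \<forall>z0 F. domain \<Omega>' \<and> bounded \<Omega>' \<and> z0 \<in> \<Omega>' \<and> F \<in> A2 \<Omega>'
           \<longrightarrow> holo_on D (\<lambda>w. pairing (\<xi> w) F z0)"
    and rho: "\<rho> > 0" and cb: "\<And>\<beta>. norm (c \<beta>) \<le> \<rho> ^ mlen \<beta>"
  shows "holo_on D (\<lambda>w. \<Sum>\<^sub>\<infinity>\<beta>. \<xi> w \<beta> * c \<beta>)"
proof -
  obtain \<Omega>' :: "(complex^'n) set" and F where H: "domain \<Omega>'" "bounded \<Omega>'" "0 \<in> \<Omega>'" "F \<in> A2 \<Omega>'"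
    "\<forall>\<beta>. mderiv \<beta> F 0 = of_nat (mfact \<beta>) * c \<beta>"
    using exists_test_fn[OF rho cb] by blast
  have "holo_on D (\<lambda>w. pairing (\<xi> w) F 0)" using hyp H by blast
  moreover have "pairing (\<xi> w) F 0 = (\<Sum>\<^sub>\<infinity>\<beta>. \<xi> w \<beta> * c \<beta>)" for w
    by (rule pairing_test) (use H(5) in auto)
  ultimately show ?thesis by simp
qed

lemma part1:
  fixes D :: "(complex^'m::finite) set" and \<xi> :: "complex^'m \<Rightarrow> ('n::finite \<Rightarrow> nat) \<Rightarrow> complex"
  assumes hyp: "\<forall>\<Omega>'::(complex^'n) set. \<forall>z0 F. domain \<Omega>' \<and> bounded \<Omega>' \<and> z0 \<in> \<Omega>' \<and> F \<in> A2 \<Omega>'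
           \<longrightarrow> holo_on D (\<lambda>w. pairing (\<xi> w) F z0)"
  shows "holo_on D (\<lambda>w. \<xi> w \<alpha>)"
proof -
  have "holo_on D (\<lambda>w. \<Sum>\<^sub>\<infinity>\<beta>. \<xi> w \<beta> * (if \<beta> = \<alpha> then 1 else 0))"
    by (rule Phi_holo[OF hyp, of 1]) auto
  moreover have "(\<Sum>\<^sub>\<infinity>\<beta>. \<xi> w \<beta> * (if \<beta> = \<alpha> then 1 else 0)) = \<xi> w \<alpha>" for w
  proof -
    have "(\<Sum>\<^sub>\<infinity>\<beta>. \<xi> w \<beta> * (if \<beta> = \<alpha> then 1 else 0)) = (\<Sum>\<^sub>\<infinity>\<beta>\<in>{\<alpha>}. \<xi> w \<beta> * (if \<beta> = \<alpha> then 1 else 0))"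
      by (rule infsum_cong_neutral) auto
    then show ?thesis by simp
  qed
  ultimately show ?thesis by simp
qed



lemma sgn_cnj_mult: "z * sgn (cnj z) = of_real (norm z)" for z :: complex
proof (cases "z = 0")
  case False
  have "z * cnj z = of_real ((norm z)\<^sup>2)" by (simp add: complex_norm_square[symmetric])
  then show ?thesis using False
    by (simp add: sgn_div_norm scaleR_conv_of_real power2_eq_square field_simps)
qed simp

lemma cm_cmult:
  fixes f :: "'a \<Rightarrow> complex"
  assumes "continuous_map X euclidean f"
  shows "continuous_map X euclidean (\<lambda>x. a * f x)"
  using assms by (auto simp: continuous_map_atin intro: tendsto_mult_left)

lemma cont_bounded_on_compact:
  fixes g :: "'a::topological_space \<Rightarrow> 'b::real_normed_vector"
  assumes "continuous_on K g" "compact K"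
  shows "\<exists>M. \<forall>w\<in>K. norm (g w) \<le> M"
proof -
  have "bounded (g ` K)" by (rule compact_imp_bounded[OF compact_continuous_image[OF assms(1,2)]])
  then show ?thesis unfolding bounded_iff by auto
qed



lemma part2:
  fixes D :: "(complex^'m::finite) set" and \<xi> :: "complex^'m \<Rightarrow> ('n::finite \<Rightarrow> nat) \<Rightarrow> complex"
  assumes dom: "domain D" and ell: "\<forall>w\<in>D. ell1 (\<xi> w)"
    and hyp: "\<forall>\<Omega>'::(complex^'n) set. \<forall>z0 F. domain \<Omega>' \<and> bounded \<Omega>' \<and> z0 \<in> \<Omega>' \<and> F \<in> A2 \<Omega>'
           \<longrightarrow> holo_on D (\<lambda>w. pairing (\<xi> w) F z0)"
  shows "loc_unif_bounded D \<xi>"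
  unfolding loc_unif_bounded_def
proof (intro ballI allI impI)
  fix w0 and \<rho> :: real assume w0: "w0 \<in> D" and rho: "\<rho> > 0"
  have openD: "open D" using dom by (simp add: domain_def)
  obtain \<delta> where \<delta>: "\<delta> > 0" "cball w0 \<delta> \<subseteq> D" using openD w0 open_contains_cball by blast
  define K where "K = cball w0 \<delta>"
  have KD: "K \<subseteq> D" and cK: "compact K" and w0K: "w0 \<in> K" using \<delta> by (auto simp: K_def)
  define X where "X = product_topology (\<lambda>\<beta>::'n\<Rightarrow>nat. top_of_set (cball (0::complex) (\<rho> ^ mlen \<beta>))) UNIV"
  have topX: "c \<in> topspace X \<longleftrightarrow> (\<forall>\<beta>. norm (c \<beta>) \<le> \<rho> ^ mlen \<beta>)" for c
    by (simp add: X_def PiE_UNIV_domain Pi_iff)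
  define \<Phi> where "\<Phi> w c = (\<Sum>\<^sub>\<infinity>\<beta>. \<xi> w \<beta> * c \<beta>)" for w c
  have summ_w: "(\<lambda>\<beta>. norm (\<xi> w \<beta>) * \<rho> ^ mlen \<beta>) summable_on UNIV" if "w \<in> D" for w
    using ell that rho unfolding ell1_def by blast
  have bndw: "norm (\<xi> w \<beta> * c \<beta>) \<le> norm (\<xi> w \<beta>) * \<rho> ^ mlen \<beta>" if "c \<in> topspace X" for w \<beta> c
    using that topX by (simp add: norm_mult mult_left_mono)
  have summc: "(\<lambda>\<beta>. \<xi> w \<beta> * c \<beta>) summable_on UNIV" if "w \<in> D" "c \<in> topspace X" for w c
  proof -
    have "(\<lambda>\<beta>. norm (\<xi> w \<beta> * c \<beta>)) summable_on UNIV"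
      by (rule Infinite_Sum.abs_summable_on_comparison_test'[OF summ_w[OF that(1)]]) (use bndw that(2) in auto)
    then show ?thesis by (rule abs_summable_summable)
  qed
  have proj: "continuous_map X euclidean (\<lambda>c. c \<beta>)" for \<beta>
    using continuous_map_product_projection[of \<beta> UNIV "\<lambda>\<beta>. top_of_set (cball (0::complex) (\<rho> ^ mlen \<beta>))"]
    unfolding X_def continuous_map_in_subtopology by auto
  have contPhi: "continuous_map X euclidean (\<Phi> w)" if w: "w \<in> D" for w
  proof -
    have "continuous_map X Met_TC.mtopology (\<lambda>c. \<Sum>\<^sub>\<infinity>\<beta>. \<xi> w \<beta> * c \<beta>)"
    proof (rule Met_TC.continuous_map_uniform_limit_alt[where F="finite_subsets_at_top UNIV" and f="\<lambda>A c. \<Sum>\<beta>\<in>A. \<xi> w \<beta> * c \<beta>"])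
      show "\<forall>\<^sub>F A in finite_subsets_at_top UNIV. continuous_map X Met_TC.mtopology (\<lambda>c. \<Sum>\<beta>\<in>A. \<xi> w \<beta> * c \<beta>)"
      proof (rule eventually_finite_subsets_at_top_weakI)
        fix A :: "('n \<Rightarrow> nat) set" assume "finite A" "A \<subseteq> UNIV"
        then show "continuous_map X Met_TC.mtopology (\<lambda>c. \<Sum>\<beta>\<in>A. \<xi> w \<beta> * c \<beta>)"
          unfolding mtopology_is_euclidean by (intro continuous_map_sum cm_cmult proj) (rule \<open>finite A\<close>)
      qed
      show "(\<lambda>c. \<Sum>\<^sub>\<infinity>\<beta>. \<xi> w \<beta> * c \<beta>) \<in> topspace X \<rightarrow> UNIV" by simp
      fix e :: real assume "e > 0"
      show "\<forall>\<^sub>F A in finite_subsets_at_top UNIV. \<forall>c\<in>topspace X. dist (\<Sum>\<beta>\<in>A. \<xi> w \<beta> * c \<beta>) (\<Sum>\<^sub>\<infinity>\<beta>. \<xi> w \<beta> * c \<beta>) < e"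
        by (rule unif_tail[OF summ_w[OF w] bndw \<open>e > 0\<close>])
    qed simp
    then show ?thesis unfolding \<Phi>_def[abs_def] by simp
  qed
  define E where "E N = {c \<in> topspace X. \<forall>w\<in>K. norm (\<Phi> w c) \<le> real N}" for N :: nat
  have closedE: "closedin X (E N)" for N
  proof -
    have "E N = \<Inter> ((\<lambda>w. {c \<in> topspace X. \<Phi> w c \<in> cball 0 (real N)}) ` K)"
      using w0K unfolding E_def by auto
    moreover have "closedin X {c \<in> topspace X. \<Phi> w c \<in> cball 0 (real N)}" if "w \<in> K" for w
      by (rule closedin_continuous_map_preimage[OF contPhi]) (use that KD in \<open>auto simp: closed_closedin[symmetric]\<close>)
    ultimately show ?thesis using w0K by (auto intro!: closedin_Inter)
  qed
  have unionE: "\<exists>N. c \<in> E N" if c: "c \<in> topspace X" for c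
  proof -
    have "holo_on D (\<lambda>w. \<Phi> w c)"
      unfolding \<Phi>_def by (rule Phi_holo[OF hyp rho]) (use c topX in auto)
    then have "continuous_on K (\<lambda>w. \<Phi> w c)" using holo_cont continuous_on_subset KD by blast
    then obtain B where B: "\<forall>w\<in>K. norm (\<Phi> w c) \<le> B" using cont_bounded_on_compact cK by blast
    have "B \<le> real (nat \<lceil>B\<rceil>)" by linarith
    then have "c \<in> E (nat \<lceil>B\<rceil>)" using B c unfolding E_def by force
    then show ?thesis by blast
  qed
  have cX: "compact_space X"
    unfolding X_def compact_space_product_topology
    by (auto intro!: compact_space_subtopology)
  have hX: "Hausdorff_space X"
    unfolding X_def Hausdorff_space_product_topology
    by (auto intro!: Hausdorff_space_subtopology)
  have "\<exists>N. X interior_of E N \<noteq> {}"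
  proof (rule ccontr)
    assume "\<not> (\<exists>N. X interior_of E N \<noteq> {})"
    then have int0: "\<And>N. X interior_of E N = {}" by simp
    have lc: "locally_compact_space X" by (rule compact_imp_locally_compact_space[OF cX])
    have rg: "regular_space X" by (rule compact_Hausdorff_imp_regular_space[OF cX hX])
    have "X interior_of \<Union> (range E) = {}"
    proof (rule Baire_category_alt)
      show "completely_metrizable_space X \<or> locally_compact_space X \<and> regular_space X" using lc rg by blast
      show "countable (range E)" by simp
      fix T assume "T \<in> range E"
      then show "closedin X T \<and> X interior_of T = {}" using closedE int0 by auto
    qed
    moreover have "\<Union> (range E) = topspace X" using unionE by (auto simp: E_def)
    moreover have "(\<lambda>_. 0) \<in> topspace X" using topX rho by simp
    ultimately show False by simp
  qed
  then obtain N c0 where c0: "c0 \<in> X interior_of E N" by blast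
  define S0 where "S0 = X interior_of E N"
  have "openin X S0" by (simp add: S0_def)
  then have "\<forall>x\<in>S0. \<exists>U. finite {\<beta>\<in>UNIV. U \<beta> \<noteq> topspace (top_of_set (cball (0::complex) (\<rho> ^ mlen \<beta>)))} \<and>
      (\<forall>\<beta>\<in>UNIV. openin (top_of_set (cball (0::complex) (\<rho> ^ mlen \<beta>))) (U \<beta>)) \<and>
      x \<in> PiE UNIV U \<and> PiE UNIV U \<subseteq> S0"
    unfolding X_def by (simp only: openin_product_topology_alt)
  then have "\<exists>U. finite {\<beta>\<in>UNIV. U \<beta> \<noteq> topspace (top_of_set (cball (0::complex) (\<rho> ^ mlen \<beta>)))} \<and>
      (\<forall>\<beta>\<in>UNIV. openin (top_of_set (cball (0::complex) (\<rho> ^ mlen \<beta>))) (U \<beta>)) \<and>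
      c0 \<in> PiE UNIV U \<and> PiE UNIV U \<subseteq> S0"
    using c0 by (simp only: S0_def)
  then obtain U where U: "finite {\<beta>\<in>UNIV. U \<beta> \<noteq> topspace (top_of_set (cball (0::complex) (\<rho> ^ mlen \<beta>)))}"
      "\<forall>\<beta>\<in>UNIV. openin (top_of_set (cball (0::complex) (\<rho> ^ mlen \<beta>))) (U \<beta>)"
      "c0 \<in> PiE UNIV U" "PiE UNIV U \<subseteq> X interior_of E N"
    unfolding S0_def by blast
  define Af where "Af = {\<beta>. U \<beta> \<noteq> cball 0 (\<rho> ^ mlen \<beta>)}"
  have finAf: "finite Af" using U(1) by (simp add: Af_def)
  have PiE_sub: "PiE UNIV U \<subseteq> E N" using U(4) interior_of_subset[of X "E N"] by (rule order_trans)
  have c0U: "c0 \<beta> \<in> U \<beta>" for \<beta> using U(3) by (auto simp: PiE_UNIV_domain)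
  define G where "G w = (\<Sum>\<beta>\<in>Af. norm (\<xi> w \<beta>) * \<rho> ^ mlen \<beta>)" for w
  have "continuous_on D G"
  proof -
    have cxi: "continuous_on D (\<lambda>w. \<xi> w \<beta>)" for \<beta> by (rule holo_cont[OF part1[OF hyp]])
    show ?thesis unfolding G_def by (intro continuous_on_sum continuous_on_mult_right continuous_on_norm cxi)
  qed
  then obtain M where M: "\<forall>w\<in>K. norm (G w) \<le> M"
    using cont_bounded_on_compact[OF continuous_on_subset[OF \<open>continuous_on D G\<close> KD] cK] by blast
  have key: "(\<Sum>\<^sub>\<infinity>\<beta>. norm (\<xi> w \<beta>) * \<rho> ^ mlen \<beta>) \<le> M + 2 * real N" if wK: "w \<in> K" for w
  proof -
    have wD: "w \<in> D" using wK KD by auto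
    define t where "t \<beta> = (if \<beta> \<in> Af then 0 else norm (\<xi> w \<beta>) * \<rho> ^ mlen \<beta>)" for \<beta>
    define c1 where "c1 \<beta> = (if \<beta> \<in> Af then c0 \<beta> else of_real (\<rho> ^ mlen \<beta>) * sgn (cnj (\<xi> w \<beta>)))" for \<beta>
    define c2 where "c2 \<beta> = (if \<beta> \<in> Af then c0 \<beta> else 0)" for \<beta>
    have c1U: "c1 \<in> PiE UNIV U"
    proof -
      have "c1 \<beta> \<in> U \<beta>" for \<beta>
      proof (cases "\<beta> \<in> Af")
        case True then show ?thesis using c0U by (simp add: c1_def)
      next
        case False
        then have "U \<beta> = cball 0 (\<rho> ^ mlen \<beta>)" by (simp add: Af_def)
        moreover have "norm (c1 \<beta>) \<le> \<rho> ^ mlen \<beta>"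
          using False rho by (simp add: c1_def norm_mult norm_sgn norm_power)
        ultimately show ?thesis by simp
      qed
      then show ?thesis by (simp add: PiE_UNIV_domain)
    qed
    have c2U: "c2 \<in> PiE UNIV U"
    proof -
      have "c2 \<beta> \<in> U \<beta>" for \<beta>
      proof (cases "\<beta> \<in> Af")
        case True then show ?thesis using c0U by (simp add: c2_def)
      next
        case False
        then have "U \<beta> = cball 0 (\<rho> ^ mlen \<beta>)" by (simp add: Af_def)
        then show ?thesis using False rho by (simp add: c2_def)
      qed
      then show ?thesis by (simp add: PiE_UNIV_domain)
    qed
    have c1E: "c1 \<in> E N" and c2E: "c2 \<in> E N" using c1U c2U PiE_sub by auto
    have c1X: "c1 \<in> topspace X" and c2X: "c2 \<in> topspace X" using c1E c2E by (auto simp: E_def)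
    have n1: "norm (\<Phi> w c1) \<le> real N" and n2: "norm (\<Phi> w c2) \<le> real N" using c1E c2E wK by (auto simp: E_def)
    have ts: "t summable_on UNIV"
    proof -
      have "(\<lambda>\<beta>. norm (t \<beta>)) summable_on UNIV"
        by (rule Infinite_Sum.abs_summable_on_comparison_test'[OF summ_w[OF wD]]) (use rho in \<open>auto simp: t_def\<close>)
      then show ?thesis by (rule abs_summable_summable)
    qed
    have "((\<lambda>\<beta>. \<xi> w \<beta> * c1 \<beta> - \<xi> w \<beta> * c2 \<beta>) has_sum (\<Phi> w c1 - \<Phi> w c2)) UNIV"
      unfolding \<Phi>_def by (intro has_sum_diff has_sum_infsum summc wD c1X c2X)
    moreover have "\<xi> w \<beta> * c1 \<beta> - \<xi> w \<beta> * c2 \<beta> = of_real (t \<beta>)" for \<beta>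
    proof (cases "\<beta> \<in> Af")
      case True then show ?thesis by (simp add: c1_def c2_def t_def)
    next
      case False
      have "\<xi> w \<beta> * (of_real (\<rho> ^ mlen \<beta>) * sgn (cnj (\<xi> w \<beta>))) = of_real (\<rho> ^ mlen \<beta>) * (\<xi> w \<beta> * sgn (cnj (\<xi> w \<beta>)))"
        by (simp add: mult_ac)
      also have "\<dots> = of_real (norm (\<xi> w \<beta>) * \<rho> ^ mlen \<beta>)" by (simp add: sgn_cnj_mult)
      finally show ?thesis using False by (simp add: c1_def c2_def t_def)
    qed
    ultimately have "((\<lambda>\<beta>. complex_of_real (t \<beta>)) has_sum (\<Phi> w c1 - \<Phi> w c2)) UNIV" by simp
    moreover have "((\<lambda>\<beta>. complex_of_real (t \<beta>)) has_sum of_real (infsum t UNIV)) UNIV"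
      by (rule has_sum_of_real[OF has_sum_infsum[OF ts]])
    ultimately have "\<Phi> w c1 - \<Phi> w c2 = of_real (infsum t UNIV)" using has_sum_unique by blast
    then have "\<bar>infsum t UNIV\<bar> = norm (\<Phi> w c1 - \<Phi> w c2)" by simp
    also have "\<dots> \<le> norm (\<Phi> w c1) + norm (\<Phi> w c2)" by (rule norm_triangle_ineq4)
    finally have tb: "infsum t UNIV \<le> 2 * real N" using n1 n2 by linarith
    have fs: "(\<lambda>\<beta>. if \<beta> \<in> Af then norm (\<xi> w \<beta>) * \<rho> ^ mlen \<beta> else 0) summable_on UNIV"
      by (rule finite_nonzero_values_imp_summable_on, rule finite_subset[OF _ finAf]) auto
    have "(\<Sum>\<^sub>\<infinity>\<beta>. norm (\<xi> w \<beta>) * \<rho> ^ mlen \<beta>) =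
        (\<Sum>\<^sub>\<infinity>\<beta>. (if \<beta> \<in> Af then norm (\<xi> w \<beta>) * \<rho> ^ mlen \<beta> else 0) + t \<beta>)"
      by (rule infsum_cong) (simp add: t_def)
    also have "\<dots> = (\<Sum>\<^sub>\<infinity>\<beta>. if \<beta> \<in> Af then norm (\<xi> w \<beta>) * \<rho> ^ mlen \<beta> else 0) + infsum t UNIV"
      by (rule infsum_add[OF fs ts])
    also have "(\<Sum>\<^sub>\<infinity>\<beta>. if \<beta> \<in> Af then norm (\<xi> w \<beta>) * \<rho> ^ mlen \<beta> else 0) = G w"
    proof -
      have "(\<Sum>\<^sub>\<infinity>\<beta>. if \<beta> \<in> Af then norm (\<xi> w \<beta>) * \<rho> ^ mlen \<beta> else 0) =
            (\<Sum>\<^sub>\<infinity>\<beta>\<in>Af. if \<beta> \<in> Af then norm (\<xi> w \<beta>) * \<rho> ^ mlen \<beta> else 0)"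
        by (rule infsum_cong_neutral) auto
      also have "\<dots> = G w" using finAf by (simp add: G_def)
      finally show ?thesis .
    qed
    also have "G w \<le> M" using M wK by force
    finally show ?thesis using tb by linarith
  qed
  show "\<exists>V. open V \<and> w0 \<in> V \<and> V \<subseteq> D \<and> (\<exists>B. \<forall>w'\<in>V. (\<Sum>\<^sub>\<infinity>\<alpha>. norm (\<xi> w' \<alpha>) * \<rho> ^ mlen \<alpha>) \<le> B)"
  proof (intro exI conjI)
    show "open (ball w0 \<delta>)" by simp
    show "w0 \<in> ball w0 \<delta>" using \<delta> by simp
    show "ball w0 \<delta> \<subseteq> D" using \<delta> by auto
    show "\<forall>w'\<in>ball w0 \<delta>. (\<Sum>\<^sub>\<infinity>\<alpha>. norm (\<xi> w' \<alpha>) * \<rho> ^ mlen \<alpha>) \<le> M + 2 * real N"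
      using key by (auto simp: K_def)
  qed
qed


theorem mainTheorem6:
  fixes D :: "(complex^'m) set"
    and \<xi> :: "complex^'m \<Rightarrow> ('n::finite \<Rightarrow> nat) \<Rightarrow> complex"
  assumes "domain D"
    and "\<forall>w\<in>D. ell1 (\<xi> w)"
    and "\<forall>\<Omega>'::(complex^'n) set. \<forall>z0 F. domain \<Omega>' \<and> bounded \<Omega>' \<and> z0 \<in> \<Omega>' \<and> F \<in> A2 \<Omega>'
           \<longrightarrow> holo_on D (\<lambda>w. pairing (\<xi> w) F z0)"
  shows "(\<forall>\<alpha>. holo_on D (\<lambda>w. \<xi> w \<alpha>)) \<and> loc_unif_bounded D \<xi>"
  using part1[OF assms(3)] part2[OF assms(1,2,3)] by blast

end
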